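(* Let $X$ be a rearrangement invariant space on $(0,\infty)$. If $L_\infty\hookrightarrow X$, then $X$ contains a lattice isometric copy of $\ell_\infty$.
   Context: A rearrangement invariant space on $(0,\infty)$ (Lebesgue measure) is a Banach space $X\subset L_0(0,\infty)$ such that $|f|\le|g|$ a.e., $g\in X$ imply $f\in X$, $\|f\|_X\le\|g\|_X$, containing an a.e. positive function, and such that equimeasurable functions have equal norms (if $f\in X$ and $g$ has the same distribution function, then $g\in X$ and $\|g\|_X=\|f\|_X$). $L_\infty\hookrightarrow X$ means $L_\infty(0,\infty)\subset X$ with continuous inclusion. A lattice isometric copy of $\ell_\infty$ is the image of a linear isometric embedding $T:\ell_\infty\to X$ that is a lattice homomorphism. *)

theory Defs
  imports "HOL-Analysis.Analysis"
begin

text \<open>Elements of L_0(0,\<infinity>) are represented by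
  Lebesgue-measurable functions real \<Rightarrow> real (values outside (0,\<infinity>) irrelevant);
  equality in L_0 is equality almost everywhere.\<close>

abbreviation Mpos :: "real measure" where
  "Mpos \<equiv> lebesgue_on {0<..}"

definition distr_fun :: "(real \<Rightarrow> real) \<Rightarrow> real \<Rightarrow> ennreal" where
  "distr_fun f s = emeasure Mpos {t \<in> space Mpos. \<bar>f t\<bar> > s}"

definition banach_function_space :: "(real \<Rightarrow> real) set \<Rightarrow> ((real \<Rightarrow> real) \<Rightarrow> real) \<Rightarrow> bool" where
  "banach_function_space X nX \<longleftrightarrow>
     X \<subseteq> borel_measurable Mpos \<and>
     (\<lambda>t. 0) \<in> X \<and>
     (\<forall>f\<in>X. \<forall>g\<in>X. (\<lambda>t. f t + g t) \<in> X) \<and>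
     (\<forall>f\<in>X. \<forall>c. (\<lambda>t. c * f t) \<in> X) \<and>
     (\<forall>f\<in>X. nX f \<ge> 0) \<and>
     (\<forall>f\<in>X. nX f = 0 \<longleftrightarrow> (AE t in Mpos. f t = 0)) \<and>
     (\<forall>f\<in>X. \<forall>g\<in>X. nX (\<lambda>t. f t + g t) \<le> nX f + nX g) \<and>
     (\<forall>f\<in>X. \<forall>c. nX (\<lambda>t. c * f t) = \<bar>c\<bar> * nX f) \<and>
     (\<forall>F. (\<forall>n. F n \<in> X) \<longrightarrow>
          (\<forall>e>0. \<exists>N. \<forall>m\<ge>N. \<forall>n\<ge>N. nX (\<lambda>t. F m t - F n t) < e) \<longrightarrow>
          (\<exists>f\<in>X. (\<lambda>n. nX (\<lambda>t. F n t - f t)) \<longlonglongrightarrow> 0))"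

definition ri_space :: "(real \<Rightarrow> real) set \<Rightarrow> ((real \<Rightarrow> real) \<Rightarrow> real) \<Rightarrow> bool" where
  "ri_space X nX \<longleftrightarrow>
     banach_function_space X nX \<and>
     (\<forall>f g. f \<in> borel_measurable Mpos \<longrightarrow> g \<in> X \<longrightarrow>
            (AE t in Mpos. \<bar>f t\<bar> \<le> \<bar>g t\<bar>) \<longrightarrow> f \<in> X \<and> nX f \<le> nX g) \<and>
     (\<exists>w\<in>X. AE t in Mpos. w t > 0) \<and>
     (\<forall>f g. f \<in> X \<longrightarrow> g \<in> borel_measurable Mpos \<longrightarrow>
            (\<forall>s. distr_fun g s = distr_fun f s) \<longrightarrow> g \<in> X \<and> nX g = nX f)"

text \<open>L_\<infinity>(0,\<infinity>) \<subseteq> X with continuous inclusion: \<open>\<parallel>f\<parallel>_X \<le> C \<parallel>f\<parallel>_\<infinity>\<close>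
  (stated with any a.e. bound B of |f|, equivalent to the essential supremum).\<close>
definition Linf_embeds :: "(real \<Rightarrow> real) set \<Rightarrow> ((real \<Rightarrow> real) \<Rightarrow> real) \<Rightarrow> bool" where
  "Linf_embeds X nX \<longleftrightarrow>
     (\<exists>C. \<forall>f B. f \<in> borel_measurable Mpos \<longrightarrow> (AE t in Mpos. \<bar>f t\<bar> \<le> B) \<longrightarrow>
            f \<in> X \<and> nX f \<le> C * B)"

definition lattice_isometric_copy_linf :: "(real \<Rightarrow> real) set \<Rightarrow> ((real \<Rightarrow> real) \<Rightarrow> real) \<Rightarrow> bool" where
  "lattice_isometric_copy_linf X nX \<longleftrightarrow>
     (\<exists>T :: (nat \<Rightarrow> real) \<Rightarrow> (real \<Rightarrow> real).
        (\<forall>x. bounded (range x) \<longrightarrow> T x \<in> X) \<and>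
        (\<forall>x y a b. bounded (range x) \<longrightarrow> bounded (range y) \<longrightarrow>
           (AE t in Mpos. T (\<lambda>n. a * x n + b * y n) t = a * T x t + b * T y t)) \<and>
        (\<forall>x y. bounded (range x) \<longrightarrow> bounded (range y) \<longrightarrow>
           (AE t in Mpos. T (\<lambda>n. max (x n) (y n)) t = max (T x t) (T y t))) \<and>
        (\<forall>x. bounded (range x) \<longrightarrow> nX (T x) = (SUP n. \<bar>x n\<bar>)))"

end

theory Submission
  imports Defs
begin

definition idx :: "real \<Rightarrow> nat" where
  "idx t = fst (prod_decode (nat \<lfloor>t\<rfloor>))"

lemma idx_meas: "idx \<in> measurable Mpos (count_space UNIV)"
proof -
  have fl: "(floor :: real \<Rightarrow> int) \<in> lebesgue \<rightarrow>\<^sub>M count_space UNIV"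
  proof -
    have "(floor :: real \<Rightarrow> int) \<in> lborel \<rightarrow>\<^sub>M count_space UNIV"
      using measurable_real_floor by simp
    from measurable_completion[OF this] show ?thesis .
  qed
  have "(\<lambda>t::real. fst (prod_decode (nat \<lfloor>t\<rfloor>))) \<in> lebesgue \<rightarrow>\<^sub>M count_space UNIV"
  proof -
    have h: "(\<lambda>k::int. fst (prod_decode (nat k))) \<in> count_space UNIV \<rightarrow>\<^sub>M (count_space UNIV :: nat measure)"
      by simp
    show ?thesis using measurable_compose[OF fl h] .
  qed
  then show ?thesis unfolding idx_def by (rule measurable_restrict_space1)
qed

lemma fiber_sets: "{t\<in>space Mpos. idx t = n} \<in> sets Mpos"
proof -
  have "idx -` {n} \<inter> space Mpos \<in> sets Mpos"
    using measurable_sets[OF idx_meas, of "{n}"] by simp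
  moreover have "idx -` {n} \<inter> space Mpos = {t\<in>space Mpos. idx t = n}" by auto
  ultimately show ?thesis by simp
qed

lemma Ioo_sub: "{real (prod_encode (n,m))<..<real (prod_encode (n,m)) + 1} \<subseteq> {t\<in>space Mpos. idx t = n}"
proof
  fix t assume t: "t \<in> {real (prod_encode (n,m))<..<real (prod_encode (n,m)) + 1}"
  then have "\<lfloor>t\<rfloor> = int (prod_encode (n,m))"
    by (intro floor_eq2) auto
  then have "idx t = n" unfolding idx_def by simp
  moreover have "t > 0" using t by auto
  ultimately show "t \<in> {t\<in>space Mpos. idx t = n}" by simp
qed

lemma fiber_inf: "emeasure Mpos {t\<in>space Mpos. idx t = n} = \<infinity>"
proof -
  define A where "A m = {real (prod_encode (n,m))<..<real (prod_encode (n,m)) + 1}" for m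
  have Am: "emeasure Mpos (A m) = 1" for m
    unfolding A_def by (subst emeasure_restrict_space) auto
  have As: "range A \<subseteq> sets Mpos"
    unfolding A_def by (auto simp: sets_restrict_space_iff)
  have dj: "disjoint_family A"
  unfolding disjoint_family_on_def
  proof (intro ballI impI)
    fix i j :: nat assume "i \<noteq> j"
    then have ne: "prod_encode (n,i) \<noteq> prod_encode (n,j)"
      by (metis prod.inject prod_encode_eq)
    show "A i \<inter> A j = {}"
    proof (rule ccontr)
      assume "A i \<inter> A j \<noteq> {}"
      then obtain t where "t \<in> A i" "t \<in> A j" by auto
      then have "\<lfloor>t\<rfloor> = int (prod_encode (n,i))" "\<lfloor>t\<rfloor> = int (prod_encode (n,j))"
        unfolding A_def by (auto intro!: floor_eq2)
      with ne show False by simp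
    qed
  qed
  have "(\<Sum>i. emeasure Mpos (A i)) = emeasure Mpos (\<Union>i. A i)"
    by (rule suminf_emeasure[OF As dj])
  moreover have "(\<Sum>i. emeasure Mpos (A i)) = \<infinity>"
    using summable_iff_suminf_neq_top[of "\<lambda>_. 1"] Am by (simp add: summable_const_iff)
  moreover have "(\<Union>i. A i) \<subseteq> {t\<in>space Mpos. idx t = n}"
    using Ioo_sub unfolding A_def by blast
  ultimately have "\<infinity> \<le> emeasure Mpos {t\<in>space Mpos. idx t = n}"
    using emeasure_mono[OF _ fiber_sets, of "\<Union>i. A i" n] by simp
  then show ?thesis by (simp add: top_unique)
qed

lemma comp_meas: "(\<lambda>t. h (idx t) :: real) \<in> borel_measurable Mpos"
  using measurable_compose[OF idx_meas, of h borel] by simp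

lemma space_inf: "emeasure Mpos (space Mpos) = \<infinity>"
proof -
  have "emeasure Mpos {t\<in>space Mpos. idx t = 0} \<le> emeasure Mpos (space Mpos)"
    by (rule emeasure_mono) auto
  then show ?thesis using fiber_inf[of 0] by (simp add: top_unique)
qed

lemma distr_eq: "distr_fun (\<lambda>t. if idx t = n then 1 else 0) s = distr_fun (\<lambda>t. 1) s"
proof (cases "s < 0")
  case True
  have "{t \<in> space Mpos. s < \<bar>if idx t = n then 1 else 0\<bar>} = space Mpos"
    using True by auto
  moreover have "{t \<in> space Mpos. s < \<bar>1::real\<bar>} = space Mpos" using True by auto
  ultimately show ?thesis unfolding distr_fun_def by simp
next
  case False
  show ?thesis
  proof (cases "s < 1")
    case True
    have "{t \<in> space Mpos. s < \<bar>if idx t = n then 1 else 0\<bar>} = {t\<in>space Mpos. idx t = n}"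
      using True False by auto
    moreover have "{t \<in> space Mpos. s < \<bar>1::real\<bar>} = space Mpos" using True by auto
    ultimately show ?thesis unfolding distr_fun_def using fiber_inf space_inf by simp
  next
    case F2: False
    have e1: "{t \<in> space Mpos. s < \<bar>if idx t = n then 1 else 0\<bar>} = {}"
      using F2 False by auto
    have e2: "{t \<in> space Mpos. s < \<bar>1::real\<bar>} = {}" using F2 by auto
    show ?thesis unfolding distr_fun_def by (simp only: e1 e2)
  qed
qed

theorem lemma3p10:
  fixes X :: "(real \<Rightarrow> real) set" and nX :: "(real \<Rightarrow> real) \<Rightarrow> real"
  assumes "ri_space X nX"
    and "Linf_embeds X nX"
  shows "lattice_isometric_copy_linf X nX"
proof -
  note R = assms(1)[unfolded ri_space_def banach_function_space_def]
  have scal: "\<And>f c. f \<in> X \<Longrightarrow> (\<lambda>t. c * f t) \<in> X" using R by blast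
  have hom: "\<And>f c. f \<in> X \<Longrightarrow> nX (\<lambda>t. c * f t) = \<bar>c\<bar> * nX f" using R by blast
  have nn: "\<And>f. f \<in> X \<Longrightarrow> nX f \<ge> 0" using R by blast
  have z: "\<And>f. f \<in> X \<Longrightarrow> nX f = 0 \<longleftrightarrow> (AE t in Mpos. f t = 0)" using R by blast
  have dom: "\<And>f g. f \<in> borel_measurable Mpos \<Longrightarrow> g \<in> X \<Longrightarrow>
            (AE t in Mpos. \<bar>f t\<bar> \<le> \<bar>g t\<bar>) \<Longrightarrow> f \<in> X \<and> nX f \<le> nX g" using R by blast
  have ri: "\<And>f g. f \<in> X \<Longrightarrow> g \<in> borel_measurable Mpos \<Longrightarrow>
            (\<forall>s. distr_fun g s = distr_fun f s) \<Longrightarrow> g \<in> X \<and> nX g = nX f" using R by blast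
  obtain C where C: "\<And>f B. f \<in> borel_measurable Mpos \<Longrightarrow> (AE t in Mpos. \<bar>f t\<bar> \<le> B) \<Longrightarrow>
            f \<in> X \<and> nX f \<le> C * B"
    using assms(2) unfolding Linf_embeds_def by blast
  define one where "one = (\<lambda>t::real. 1::real)"
  have one_X: "one \<in> X" using C[of one 1] unfolding one_def by simp
  have "nX one \<noteq> 0"
  proof
    assume "nX one = 0"
    then have "AE t in Mpos. False" using z[OF one_X] unfolding one_def by simp
    then have "ae_filter Mpos = bot" using trivial_limit_def by blast
    then show False using space_inf by (simp add: ae_filter_eq_bot_iff)
  qed
  then have pos: "nX one > 0" using nn[OF one_X] by simp
  define c where "c = 1 / nX one"
  have cpos: "c > 0" using pos unfolding c_def by simp
  have cn: "c * nX one = 1" using pos unfolding c_def by simp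
  define g where "g n = (\<lambda>t. if idx t = n then 1 else (0::real))" for n
  have gX: "g n \<in> X" and gn: "nX (g n) = nX one" for n
  proof -
    have "g n \<in> borel_measurable Mpos" unfolding g_def by (rule comp_meas)
    then have "g n \<in> X \<and> nX (g n) = nX one"
      using ri[OF one_X] distr_eq unfolding g_def one_def by blast
    then show "g n \<in> X" "nX (g n) = nX one" by auto
  qed
  define T where "T x = (\<lambda>t. c * x (idx t))" for x :: "nat \<Rightarrow> real"
  have Tmeas: "T x \<in> borel_measurable Mpos" for x unfolding T_def by (rule comp_meas)
  have main: "T x \<in> X \<and> nX (T x) = (SUP n. \<bar>x n\<bar>)" if bx: "bounded (range x)" for x
  proof -
    obtain B where B: "\<And>n. \<bar>x n\<bar> \<le> B" using bx unfolding bounded_real by blast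
    have bdd: "bdd_above (range (\<lambda>n. \<bar>x n\<bar>))" using B by (intro bdd_aboveI[of _ B]) auto
    define S where "S = (SUP n. \<bar>x n\<bar>)"
    have xS: "\<bar>x n\<bar> \<le> S" for n unfolding S_def by (rule cSUP_upper[OF _ bdd]) simp
    have S0: "S \<ge> 0" using xS[of 0] by simp
    have cS_X: "(\<lambda>t. (c * S) * one t) \<in> X" by (rule scal[OF one_X])
    have cS_n: "nX (\<lambda>t. (c * S) * one t) = S"
      using hom[OF one_X, of "c * S"] cpos S0 cn by (simp add: abs_mult algebra_simps)
    have bnd: "\<bar>T x t\<bar> \<le> \<bar>(c * S) * one t\<bar>" for t
      unfolding T_def one_def using xS[of "idx t"] cpos S0 by (simp add: abs_mult)
    have d1: "T x \<in> X \<and> nX (T x) \<le> S"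
      using dom[OF Tmeas cS_X] bnd cS_n by simp
    have lo: "\<bar>x n\<bar> \<le> nX (T x)" for n
    proof -
      have fm: "(\<lambda>t. (c * x n) * g n t) \<in> borel_measurable Mpos"
        unfolding g_def using comp_meas[of "\<lambda>k. (c * x n) * (if k = n then 1 else 0)"] by simp
      have "\<bar>(c * x n) * g n t\<bar> \<le> \<bar>T x t\<bar>" for t
        unfolding g_def T_def by simp
      then have "nX (\<lambda>t. (c * x n) * g n t) \<le> nX (T x)"
        using dom[OF fm] d1 by simp
      moreover have "nX (\<lambda>t. (c * x n) * g n t) = \<bar>x n\<bar>"
        using hom[OF gX, of "c * x n" n] gn cpos cn by (simp add: abs_mult algebra_simps)
      ultimately show ?thesis by simp
    qed
    have "S \<le> nX (T x)" unfolding S_def by (rule cSUP_least) (auto intro: lo)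
    with d1 show ?thesis unfolding S_def by simp
  qed
  show ?thesis
    unfolding lattice_isometric_copy_linf_def
  proof (intro exI[of _ T] conjI allI impI)
    fix x :: "nat \<Rightarrow> real" assume "bounded (range x)"
    then show "T x \<in> X" using main by blast
  next
    fix x :: "nat \<Rightarrow> real" assume "bounded (range x)"
    then show "nX (T x) = (SUP n. \<bar>x n\<bar>)" using main by blast
  next
    fix x y :: "nat \<Rightarrow> real" and a b :: real
    show "AE t in Mpos. T (\<lambda>n. a * x n + b * y n) t = a * T x t + b * T y t"
      unfolding T_def by (simp add: algebra_simps)
  next
    fix x y :: "nat \<Rightarrow> real"
    show "AE t in Mpos. T (\<lambda>n. max (x n) (y n)) t = max (T x t) (T y t)"
      unfolding T_def using cpos by (simp add: max_mult_distrib_left)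
  qed
qed

end
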